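(* Let $f=\rho M_\Omega$ with $\rho>0$ and $\Omega=\Omega[f]\in\mathbb{S}^{d-1}$, and let $P_f=I_d-\Omega\otimes\Omega$. Then: (1) the linearization $\mathcal{L}_fg:=\frac{d}{ds}\big|_{s=0}Q(f+sg)$ is $$\mathcal{L}_fg=\mathrm{div}_v\Big\{\sigma\nabla_vg+g\nabla_v\Phi_\Omega-\frac{f}{\int(v\cdot\Omega)f\,dv}P_f\int g(v)v\,dv\Big\};$$ in particular $\mathcal{L}_{\rho M_\Omega}=\mathcal{L}_{M_\Omega}$; (2) the formal adjoint of $\mathcal{L}_f$ is $$\mathcal{L}_f^\star\psi=\sigma\frac{\mathrm{div}_v(M_\Omega\nabla_v\psi)}{M_\Omega}+P_fv\cdot W[\psi],\qquad W[\psi]:=\frac{\int M_\Omega\nabla_v\psi\,dv}{\int(v\cdot\Omega)M_\Omega\,dv};$$ (3) $\mathcal{L}_f\big(f\,(v-\Omega)\big)=\sigma\nabla_vf-\mathrm{div}_v\big(f\,\mathcal{M}_\Omega/c_1\big)$ (applied componentwise), where $\mathrm{div}_v$ of a matrix is taken row by row.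
   Context: Standing setting: $d\ge2$, $\sigma>0$, $V:[0,\infty)\to\mathbb{R}$ a potential used as the radial function $v\mapsto V(|v|)$. For $\Omega\in\mathbb{S}^{d-1}$ set $\Phi_\Omega(v)=\frac{|v-\Omega|^2}{2}+V(|v|)$, $Z_\Omega=\int e^{-\Phi_\Omega/\sigma}dv<\infty$, $M_\Omega=e^{-\Phi_\Omega/\sigma}/Z_\Omega$, with $\int|v|^2M_\Omega<\infty$. For a density $f$: $\Omega[f]=\int fv\,dv/|\int fv\,dv|$ if $\int fv\,dv\ne0$, else $0$. $Q(f)=\mathrm{div}_v\{\sigma\nabla_vf+f(v-\Omega[f])+f\nabla_vV(|v|)\}$. $c_1:=\int(v\cdot\Omega)M_\Omega(v)\,dv$ and the pressure tensor $\mathcal{M}_\Omega:=\int(v-\Omega)\otimes(I_d-\Omega\otimes\Omega)(v-\Omega)\,M_\Omega(v)\,dv$. *)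

theory Defs
  imports "HOL-Analysis.Analysis"
begin

text \<open>Velocities live in \<open>real^'n\<close>, d = CARD('n). Integrals are Lebesgue (Bochner)
integrals over \<open>lborel\<close>.\<close>

definition partial_i :: "'n::finite \<Rightarrow> (real^'n \<Rightarrow> real) \<Rightarrow> real^'n \<Rightarrow> real" where
  "partial_i i h v = frechet_derivative h (at v) (axis i 1)"

definition grad :: "(real^'n::finite \<Rightarrow> real) \<Rightarrow> real^'n \<Rightarrow> real^'n" where
  "grad h v = (\<chi> i. partial_i i h v)"

definition divg :: "(real^'n::finite \<Rightarrow> real^'n) \<Rightarrow> real^'n \<Rightarrow> real" where
  "divg F v = (\<Sum>i\<in>UNIV. partial_i i (\<lambda>w. F w $ i) v)"

definition C2 :: "(real^'n::finite \<Rightarrow> real) \<Rightarrow> bool" where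
  "C2 h \<longleftrightarrow> (\<forall>v. h differentiable (at v))
     \<and> (\<forall>i v. (\<lambda>w. partial_i i h w) differentiable (at v))
     \<and> (\<forall>i j. continuous_on UNIV (\<lambda>w. partial_i j (\<lambda>u. partial_i i h u) w))"

definition compact_supp :: "(real^'n::finite \<Rightarrow> real) \<Rightarrow> bool" where
  "compact_supp g \<longleftrightarrow> compact (closure {v. g v \<noteq> 0})"

definition outer :: "real^'n::finite \<Rightarrow> real^'n \<Rightarrow> real^'n^'n" where
  "outer a b = (\<chi> i j. a $ i * b $ j)"

definition projP :: "real^'n::finite \<Rightarrow> real^'n^'n" where
  "projP \<Omega> = mat 1 - outer \<Omega> \<Omega>"

definition Phi :: "(real \<Rightarrow> real) \<Rightarrow> real^'n::finite \<Rightarrow> real^'n \<Rightarrow> real" where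
  "Phi V \<Omega> v = (norm (v - \<Omega>))\<^sup>2 / 2 + V (norm v)"

definition Zc :: "(real \<Rightarrow> real) \<Rightarrow> real \<Rightarrow> real^'n::finite \<Rightarrow> real" where
  "Zc V \<sigma> \<Omega> = (\<integral>v. exp (- Phi V \<Omega> v / \<sigma>) \<partial>lborel)"

definition Mx :: "(real \<Rightarrow> real) \<Rightarrow> real \<Rightarrow> real^'n::finite \<Rightarrow> real^'n \<Rightarrow> real" where
  "Mx V \<sigma> \<Omega> v = exp (- Phi V \<Omega> v / \<sigma>) / Zc V \<sigma> \<Omega>"

definition Omega_of :: "(real^'n::finite \<Rightarrow> real) \<Rightarrow> real^'n" where
  "Omega_of f = (let J = (\<integral>v. f v *\<^sub>R v \<partial>lborel) in if J \<noteq> 0 then J /\<^sub>R norm J else 0)"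

definition Qop :: "(real \<Rightarrow> real) \<Rightarrow> real \<Rightarrow> (real^'n::finite \<Rightarrow> real) \<Rightarrow> real^'n \<Rightarrow> real" where
  "Qop V \<sigma> f v = divg (\<lambda>w. \<sigma> *\<^sub>R grad f w + f w *\<^sub>R (w - Omega_of f)
                               + f w *\<^sub>R grad (\<lambda>u. V (norm u)) w) v"

definition Lin :: "(real \<Rightarrow> real) \<Rightarrow> real \<Rightarrow> (real^'n::finite \<Rightarrow> real) \<Rightarrow> (real^'n \<Rightarrow> real) \<Rightarrow> real^'n \<Rightarrow> real" where
  "Lin V \<sigma> f g v = deriv (\<lambda>s. Qop V \<sigma> (\<lambda>w. f w + s * g w) v) 0"

definition c1 :: "(real \<Rightarrow> real) \<Rightarrow> real \<Rightarrow> real^'n::finite \<Rightarrow> real" where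
  "c1 V \<sigma> \<Omega> = (\<integral>v. (v \<bullet> \<Omega>) * Mx V \<sigma> \<Omega> v \<partial>lborel)"

definition pressure :: "(real \<Rightarrow> real) \<Rightarrow> real \<Rightarrow> real^'n::finite \<Rightarrow> real^'n^'n" where
  "pressure V \<sigma> \<Omega> = (\<integral>v. Mx V \<sigma> \<Omega> v *\<^sub>R outer (v - \<Omega>) (projP \<Omega> *v (v - \<Omega>)) \<partial>lborel)"

end

theory Submission
  imports Defs
begin

lemma pd_hasD: "(h has_derivative D) (at v) \<Longrightarrow> partial_i i h v = D (axis i 1)"
  unfolding partial_i_def using frechet_derivative_at by metis

lemma diff_hasD:
  fixes h :: "real^'n::finite \<Rightarrow> real"
  assumes "h differentiable (at v)"
  shows "(h has_derivative (\<lambda>d. grad h v \<bullet> d)) (at v)"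
proof -
  obtain D where D: "(h has_derivative D) (at v)" using assms differentiable_def by blast
  have lin: "linear D" using D has_derivative_linear by blast
  have "D d = grad h v \<bullet> d" for d
  proof -
    have "D d = D (\<Sum>j\<in>UNIV. d$j *\<^sub>R axis j 1)"
      using basis_expansion[of d] by (simp add: scalar_mult_eq_scaleR)
    also have "\<dots> = (\<Sum>j\<in>UNIV. d$j * D (axis j 1))"
      using lin by (simp add: linear_sum linear_scale)
    also have "\<dots> = grad h v \<bullet> d"
      unfolding grad_def inner_vec_def using pd_hasD[OF D]
      by (simp add: mult.commute)
    finally show ?thesis .
  qed
  then have "D = (\<lambda>d. grad h v \<bullet> d)" by auto
  with D show ?thesis by simp
qed

lemma pd_grad: "h differentiable (at v) \<Longrightarrow> partial_i i h v = grad h v $ i"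
  by (simp add: grad_def)

lemma pd_add:
  fixes h1 h2 :: "real^'n::finite \<Rightarrow> real"
  assumes "h1 differentiable (at v)" "h2 differentiable (at v)"
  shows "partial_i i (\<lambda>w. h1 w + h2 w) v = partial_i i h1 v + partial_i i h2 v"
  using has_derivative_add[OF diff_hasD[OF assms(1)] diff_hasD[OF assms(2)]]
  by (simp add: pd_hasD inner_axis grad_def)

lemma pd_diff:
  fixes h1 h2 :: "real^'n::finite \<Rightarrow> real"
  assumes "h1 differentiable (at v)" "h2 differentiable (at v)"
  shows "partial_i i (\<lambda>w. h1 w - h2 w) v = partial_i i h1 v - partial_i i h2 v"
  using has_derivative_diff[OF diff_hasD[OF assms(1)] diff_hasD[OF assms(2)]]
  by (simp add: pd_hasD inner_axis grad_def)

lemma pd_mult: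
  fixes h1 h2 :: "real^'n::finite \<Rightarrow> real"
  assumes "h1 differentiable (at v)" "h2 differentiable (at v)"
  shows "partial_i i (\<lambda>w. h1 w * h2 w) v = partial_i i h1 v * h2 v + h1 v * partial_i i h2 v"
  using has_derivative_mult[OF diff_hasD[OF assms(1)] diff_hasD[OF assms(2)]]
  by (simp add: pd_hasD inner_axis grad_def algebra_simps)

lemma pd_const: "partial_i i (\<lambda>w::real^'n::finite. c::real) v = 0"
  by (simp add: pd_hasD[OF has_derivative_const])

lemma pd_coord: "partial_i i (\<lambda>w::real^'n::finite. w $ j) v = (if i = j then 1 else 0)"
proof -
  have "((\<lambda>w::real^'n. w $ j) has_derivative (\<lambda>d. d $ j)) (at v)"
    by (rule bounded_linear_imp_has_derivative[OF bounded_linear_vec_nth])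
  then show ?thesis by (simp add: pd_hasD axis_def)
qed

lemma pd_exp:
  fixes h :: "real^'n::finite \<Rightarrow> real"
  assumes "h differentiable (at v)"
  shows "partial_i i (\<lambda>w. exp (h w)) v = exp (h v) * partial_i i h v"
  using has_derivative_exp[OF diff_hasD[OF assms]]
  by (simp add: pd_hasD inner_axis grad_def)

lemma pd_sum:
  fixes h :: "'a \<Rightarrow> real^'n::finite \<Rightarrow> real"
  assumes "finite S" "\<And>k. k \<in> S \<Longrightarrow> h k differentiable (at v)"
  shows "partial_i i (\<lambda>w. \<Sum>k\<in>S. h k w) v = (\<Sum>k\<in>S. partial_i i (h k) v)"
proof -
  have "((\<lambda>w. \<Sum>k\<in>S. h k w) has_derivative (\<lambda>d. \<Sum>k\<in>S. grad (h k) v \<bullet> d)) (at v)"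
    using assms by (intro has_derivative_sum diff_hasD) auto
  then show ?thesis by (simp add: pd_hasD inner_axis grad_def)
qed

lemma diff_exp: "(h::real^'n::finite \<Rightarrow> real) differentiable (at v) \<Longrightarrow> (\<lambda>w. exp (h w)) differentiable (at v)"
  using has_derivative_exp[OF diff_hasD] differentiableI by blast

lemma diff_coord: "(\<lambda>w::real^'n::finite. w $ j) differentiable (at v)"
  using bounded_linear_imp_has_derivative[OF bounded_linear_vec_nth] differentiableI by blast

lemma hasD_sq: "((\<lambda>w::real^'n::finite. (norm (w - \<Omega>))\<^sup>2 / 2) has_derivative (\<lambda>d. (v - \<Omega>) \<bullet> d)) (at v)"
proof -
  have "((\<lambda>w::real^'n. ((w - \<Omega>) \<bullet> (w - \<Omega>)) / 2) has_derivative (\<lambda>d. ((v - \<Omega>) \<bullet> d + d \<bullet> (v - \<Omega>)) / 2)) (at v)"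
    by (auto intro!: derivative_eq_intros)
  then show ?thesis by (simp add: power2_norm_eq_inner inner_commute)
qed

lemma Phi_diff:
  fixes \<Omega> :: "real^'n::finite"
  assumes "C2 (\<lambda>v::real^'n::finite. V (norm v))"
  shows "Phi V \<Omega> differentiable (at v)"
    and "partial_i i (Phi V \<Omega>) v = (v - \<Omega>)$i + partial_i i (\<lambda>u. V (norm u)) v"
proof -
  have dv: "(\<lambda>u::real^'n. V (norm u)) differentiable (at v)" using assms unfolding C2_def by blast
  have h: "(Phi V \<Omega> has_derivative (\<lambda>d. (v - \<Omega>) \<bullet> d + grad (\<lambda>u. V (norm u)) v \<bullet> d)) (at v)"
    unfolding Phi_def[abs_def] by (intro has_derivative_add hasD_sq diff_hasD dv)
  then show "Phi V \<Omega> differentiable (at v)" using differentiableI by blast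
  show "partial_i i (Phi V \<Omega>) v = (v - \<Omega>)$i + partial_i i (\<lambda>u. V (norm u)) v"
    using h by (simp add: pd_hasD inner_axis grad_def)
qed


lemma dPhi_eq:
  fixes \<Omega> :: "real^'n::finite"
  assumes "C2 (\<lambda>v::real^'n::finite. V (norm v))"
  shows "partial_i i (Phi V \<Omega>) = (\<lambda>w. (w $ i - \<Omega> $ i) + partial_i i (\<lambda>u. V (norm u)) w)"
  using Phi_diff(2)[OF assms] by auto

lemma cont_of_diff: "(\<And>v. h differentiable (at v)) \<Longrightarrow> continuous_on UNIV h"
  by (meson differentiable_at_imp_differentiable_on differentiable_imp_continuous_on)

lemma meas_of_cont: "continuous_on UNIV h \<Longrightarrow> h \<in> borel_measurable lborel"
  by (simp add: borel_measurable_continuous_onI)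

locale setting =
  fixes V :: "real \<Rightarrow> real" and \<sigma> :: real and \<Omega> :: "real^'n::finite"
  assumes sigma_pos: "\<sigma> > 0"
    and V_reg: "C2 (\<lambda>v::real^'n. V (norm v))"
    and Omega_unit: "norm \<Omega> = 1"
    and Z_int: "integrable lborel (\<lambda>v. exp (- Phi V \<Omega> v / \<sigma>))"
    and mom2: "integrable lborel (\<lambda>v. (norm v)\<^sup>2 * Mx V \<sigma> \<Omega> v)"
    and Z_ne: "Zc V \<sigma> \<Omega> \<noteq> 0"
begin

abbreviation "M \<equiv> Mx V \<sigma> \<Omega>"
abbreviation "Vn \<equiv> (\<lambda>u::real^'n. V (norm u))"

lemma Vn_diff: "Vn differentiable (at v)" using V_reg unfolding C2_def by blast
lemma dVn_diff: "partial_i i Vn differentiable (at v)" using V_reg unfolding C2_def by blast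
lemma ddVn_cont: "continuous_on UNIV (partial_i j (partial_i i Vn))" using V_reg unfolding C2_def by blast

lemma Z_pos: "Zc V \<sigma> \<Omega> > 0"
proof -
  have "Zc V \<sigma> \<Omega> \<ge> 0" unfolding Zc_def by (rule Bochner_Integration.integral_nonneg) auto
  with Z_ne show ?thesis by simp
qed

lemma M_eq: "M = (\<lambda>w. exp (- Phi V \<Omega> w / \<sigma>) / Zc V \<sigma> \<Omega>)"
  by (simp add: Mx_def[abs_def])

lemma M_pos: "M w > 0" using Z_pos by (simp add: Mx_def)

lemma Phi_d: "Phi V \<Omega> differentiable (at v)" using Phi_diff(1)[OF V_reg] .

lemma M_hasD: "(M has_derivative (\<lambda>d. - M v * (grad (Phi V \<Omega>) v \<bullet> d) / \<sigma>)) (at v)"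
proof -
  have "((\<lambda>w. exp (- Phi V \<Omega> w / \<sigma>) / Zc V \<sigma> \<Omega>) has_derivative
        (\<lambda>d. exp (- Phi V \<Omega> v / \<sigma>) * (- (grad (Phi V \<Omega>) v \<bullet> d) / \<sigma>) / Zc V \<sigma> \<Omega>)) (at v)"
    using sigma_pos Z_ne by (auto intro!: derivative_eq_intros diff_hasD Phi_d simp: ac_simps)
  then show ?thesis unfolding M_eq by (simp add: Mx_def ac_simps)
qed

lemma M_diff: "M differentiable (at v)" using M_hasD differentiableI by blast

lemma dPhi: "partial_i i (Phi V \<Omega>) = (\<lambda>w. (w $ i - \<Omega> $ i) + partial_i i Vn w)"
  using dPhi_eq[OF V_reg] .

lemma dPhi_diff: "partial_i i (Phi V \<Omega>) differentiable (at v)"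
  unfolding dPhi by (intro differentiable_add differentiable_diff diff_coord dVn_diff) simp

lemma ddPhi: "partial_i j (partial_i i (Phi V \<Omega>)) v = (if j = i then 1 else 0) + partial_i j (partial_i i Vn) v"
  unfolding dPhi
  by (subst pd_add) (auto intro!: differentiable_diff diff_coord dVn_diff simp: pd_diff diff_coord pd_coord pd_const)

lemma dM: "partial_i i M = (\<lambda>w. - M w * partial_i i (Phi V \<Omega>) w / \<sigma>)"
  by (rule ext) (simp add: pd_hasD[OF M_hasD] inner_axis grad_def)

lemma dM_diff: "partial_i i M differentiable (at v)"
  unfolding dM by (intro differentiable_divide differentiable_mult differentiable_minus M_diff dPhi_diff) (use sigma_pos in auto)

lemma M_cont: "continuous_on UNIV M" using M_diff cont_of_diff by blast
lemma dM_cont: "continuous_on UNIV (partial_i i M)" using dM_diff cont_of_diff by blast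
lemma M_meas: "M \<in> borel_measurable lborel" using M_cont meas_of_cont by blast

lemma M_int: "integrable lborel M"
  unfolding M_eq by (intro integrable_divide_zero Z_int)

lemma mom_int:
  fixes g :: "real^'n \<Rightarrow> 'b::{banach, second_countable_topology}"
  assumes "g \<in> borel_measurable lborel" "\<And>v. norm (g v) \<le> M v * (a * (norm v)\<^sup>2 + b)"
  shows "integrable lborel g"
proof -
  have intF: "integrable lborel (\<lambda>v. a * ((norm v)\<^sup>2 * M v) + b * M v)"
    using mom2 M_int by auto
  have "AE x in lborel. norm (g x) \<le> norm (a * ((norm x)\<^sup>2 * M x) + b * M x)"
  proof (rule AE_I2)
    fix x
    have "norm (g x) \<le> M x * (a * (norm x)\<^sup>2 + b)" by fact
    also have "\<dots> = a * ((norm x)\<^sup>2 * M x) + b * M x" by (simp add: algebra_simps)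
    also have "\<dots> \<le> norm (a * ((norm x)\<^sup>2 * M x) + b * M x)" by simp
    finally show "norm (g x) \<le> norm (a * ((norm x)\<^sup>2 * M x) + b * M x)" .
  qed
  then show ?thesis using Bochner_Integration.integrable_bound[OF intF assms(1)] by blast
qed

lemma norm_le_sq: "norm (v::real^'n) \<le> (norm v)\<^sup>2 + 1"
proof (cases "norm v \<le> 1")
  case True then show ?thesis by (smt (verit) zero_le_power2)
next
  case False
  then have "norm v * 1 \<le> norm v * norm v" by (intro mult_left_mono) auto
  then show ?thesis by (simp add: power2_eq_square)
qed

lemma M_v_int: "integrable lborel (\<lambda>v. M v *\<^sub>R v)"
proof (rule mom_int[where a=1 and b=1])
  show "(\<lambda>v. M v *\<^sub>R v) \<in> borel_measurable lborel" using M_meas by measurable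
  fix v
  have "norm (M v *\<^sub>R v) = M v * norm v" using M_pos[of v] by simp
  also have "\<dots> \<le> M v * (1 * (norm v)\<^sup>2 + 1)" using M_pos[of v] norm_le_sq[of v]
    by (intro mult_left_mono) auto
  finally show "norm (M v *\<^sub>R v) \<le> M v * (1 * (norm v)\<^sup>2 + 1)" .
qed

end

lemma hasD_coord: "((\<lambda>w::real^'n::finite. w $ j) has_derivative (\<lambda>d. d $ j)) F"
  by (rule bounded_linear_imp_has_derivative[OF bounded_linear_vec_nth])

lemma pd_by: "(F has_derivative D) (at v) \<Longrightarrow> D (axis i 1) = x \<Longrightarrow> partial_i i F v = x"
  using pd_hasD by metis

lemma grad_axis[simp]: "grad h v \<bullet> axis i 1 = partial_i i h v"
  by (simp add: grad_def inner_axis)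

lemma grad_axis'[simp]: "axis i 1 \<bullet> grad h v = partial_i i h v"
  by (simp add: grad_def inner_axis')

lemma axis_nth[simp]: "axis i (1::real) $ j = (if j = i then 1 else 0)"
  by (simp add: axis_def)

context setting begin

lemma Qop_formula:
  assumes ud: "\<And>w. u differentiable (at w)" and udd: "\<And>i w. partial_i i u differentiable (at w)"
  shows "Qop V \<sigma> u v = (\<Sum>i\<in>UNIV. \<sigma> * partial_i i (partial_i i u) v
      + partial_i i u v * (v$i - Omega_of u $ i) + u v
      + partial_i i u v * partial_i i Vn v + u v * partial_i i (partial_i i Vn) v)"
  unfolding Qop_def divg_def
proof (rule sum.cong[OF refl])
  fix i
  have eq: "(\<lambda>w. (\<sigma> *\<^sub>R grad u w + u w *\<^sub>R (w - Omega_of u) + u w *\<^sub>R grad Vn w) $ i)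
      = (\<lambda>w. \<sigma> * partial_i i u w + u w * (w $ i - Omega_of u $ i) + u w * partial_i i Vn w)"
    by (simp add: grad_def algebra_simps)
  show "partial_i i (\<lambda>w. (\<sigma> *\<^sub>R grad u w + u w *\<^sub>R (w - Omega_of u) + u w *\<^sub>R grad Vn w) $ i) v
     = \<sigma> * partial_i i (partial_i i u) v + partial_i i u v * (v$i - Omega_of u $ i) + u v
      + partial_i i u v * partial_i i Vn v + u v * partial_i i (partial_i i Vn) v"
    unfolding eq
    apply (rule pd_by)
     apply (rule derivative_eq_intros diff_hasD[OF ud] diff_hasD[OF udd] diff_hasD[OF Vn_diff] diff_hasD[OF dVn_diff] hasD_coord refl)+
    apply (simp add: algebra_simps)
    done
qed

end

lemma normalize_deriv:
  fixes J Jg :: "real^'n::finite"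
  assumes "J \<noteq> 0"
  shows "((\<lambda>s::real. inverse (norm (J + s *\<^sub>R Jg)) *\<^sub>R (J + s *\<^sub>R Jg)) has_derivative
     (\<lambda>h. h *\<^sub>R ((1 / norm J) *\<^sub>R Jg - ((sgn J \<bullet> Jg) / (norm J)^2) *\<^sub>R J))) (at 0)"
proof -
  have a: "((\<lambda>s::real. J + s *\<^sub>R Jg) has_derivative (\<lambda>h. h *\<^sub>R Jg)) (at 0)"
    by (auto intro!: derivative_eq_intros)
  have n: "((\<lambda>s::real. norm (J + s *\<^sub>R Jg)) has_derivative (\<lambda>h. sgn J \<bullet> (h *\<^sub>R Jg))) (at 0)"
  proof -
    have nJ: "(norm has_derivative (\<lambda>h. h \<bullet> sgn J)) (at ((\<lambda>s::real. J + s *\<^sub>R Jg) 0))"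
      using has_derivative_norm[OF assms] by simp
    show ?thesis using has_derivative_compose[OF a nJ] by (simp add: inner_commute)
  qed
  have i: "((\<lambda>s::real. inverse (norm (J + s *\<^sub>R Jg))) has_derivative (\<lambda>h. - (inverse (norm J) * (sgn J \<bullet> (h *\<^sub>R Jg)) * inverse (norm J)))) (at 0)"
    using Deriv.has_derivative_inverse[OF _ n] assms by simp
  show ?thesis
    using has_derivative_scaleR[OF i a] assms
    by (simp add: algebra_simps field_simps power2_eq_square)
qed

lemma outer_mult: "outer a b *v x = (b \<bullet> x) *\<^sub>R (a::real^'n::finite)"
proof -
  have "(outer a b *v x) $ i = ((b \<bullet> x) *\<^sub>R a) $ i" for i
    unfolding outer_def matrix_vector_mult_def inner_vec_def
    by (simp add: sum_distrib_left sum_distrib_right ac_simps)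
  then show ?thesis by (simp add: vec_eq_iff)
qed

lemma projP_mult: "projP \<Omega> *v x = x - (\<Omega> \<bullet> x) *\<^sub>R (\<Omega>::real^'n::finite)"
  unfolding projP_def by (simp only: matrix_vector_mult_diff_rdistrib outer_mult matrix_vector_mul_lid)

context setting begin

lemma divG_formula:
  assumes gd: "\<And>w. g differentiable (at w)" and gdd: "\<And>i w. partial_i i g differentiable (at w)"
  shows "divg (\<lambda>w. \<sigma> *\<^sub>R grad g w + g w *\<^sub>R grad (Phi V \<Omega>) w - (\<rho> * M w / K) *\<^sub>R c) v
    = (\<Sum>i\<in>UNIV. \<sigma> * partial_i i (partial_i i g) v + partial_i i g v * ((v$i - \<Omega>$i) + partial_i i Vn v)
        + g v * (1 + partial_i i (partial_i i Vn) v) - \<rho> * partial_i i M v / K * c$i)"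
  unfolding divg_def
proof (rule sum.cong[OF refl])
  fix i
  have eq: "(\<lambda>w. (\<sigma> *\<^sub>R grad g w + g w *\<^sub>R grad (Phi V \<Omega>) w - (\<rho> * M w / K) *\<^sub>R c) $ i)
      = (\<lambda>w. \<sigma> * partial_i i g w + g w * (w $ i - \<Omega> $ i + partial_i i Vn w) - M w * (\<rho> * c $ i / K))"
    by (simp add: grad_def dPhi algebra_simps)
  show "partial_i i (\<lambda>w. (\<sigma> *\<^sub>R grad g w + g w *\<^sub>R grad (Phi V \<Omega>) w - (\<rho> * M w / K) *\<^sub>R c) $ i) v
     = \<sigma> * partial_i i (partial_i i g) v + partial_i i g v * ((v$i - \<Omega>$i) + partial_i i Vn v)
        + g v * (1 + partial_i i (partial_i i Vn) v) - \<rho> * partial_i i M v / K * c$i"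
    unfolding eq
    apply (rule pd_by)
     apply (rule derivative_eq_intros diff_hasD[OF gd] diff_hasD[OF gdd] diff_hasD[OF M_diff] diff_hasD[OF dVn_diff] hasD_coord refl)+
    apply (simp add: algebra_simps)
    done
qed

lemma Omega_facts:
  assumes rho: "\<rho> > 0" and Om: "Omega_of (\<lambda>v. \<rho> * M v) = \<Omega>"
  shows "(\<integral>v. M v *\<^sub>R v \<partial>lborel) \<noteq> 0"
    and "\<Omega> = (\<integral>v. M v *\<^sub>R v \<partial>lborel) /\<^sub>R norm (\<integral>v. M v *\<^sub>R v \<partial>lborel)"
    and "c1 V \<sigma> \<Omega> = norm (\<integral>v. M v *\<^sub>R v \<partial>lborel)"
    and "Omega_of M = \<Omega>"
proof -
  define J where "J = (\<integral>v. M v *\<^sub>R v \<partial>lborel)"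
  have Jf: "(\<integral>v. (\<rho> * M v) *\<^sub>R v \<partial>lborel) = \<rho> *\<^sub>R J"
    unfolding J_def by (simp flip: integral_scaleR_right)
  have OO: "Omega_of (\<lambda>v. \<rho> * M v) = (if \<rho> *\<^sub>R J \<noteq> 0 then (\<rho> *\<^sub>R J) /\<^sub>R norm (\<rho> *\<^sub>R J) else 0)"
    unfolding Omega_of_def Let_def Jf ..
  have J0: "J \<noteq> 0"
  proof
    assume "J = 0"
    then have "Omega_of (\<lambda>v. \<rho> * M v) = 0" using OO by simp
    then show False using Om Omega_unit by simp
  qed
  have OmJ': "\<Omega> = J /\<^sub>R norm J"
  proof -
    have "\<rho> *\<^sub>R J \<noteq> 0" using J0 rho by simp
    then have "\<Omega> = (\<rho> *\<^sub>R J) /\<^sub>R norm (\<rho> *\<^sub>R J)" using OO Om by simp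
    also have "\<dots> = J /\<^sub>R norm J" using rho by simp
    finally show ?thesis .
  qed
  show "(\<integral>v. M v *\<^sub>R v \<partial>lborel) \<noteq> 0" using J0 unfolding J_def .
  show "\<Omega> = (\<integral>v. M v *\<^sub>R v \<partial>lborel) /\<^sub>R norm (\<integral>v. M v *\<^sub>R v \<partial>lborel)" using OmJ' unfolding J_def .
  have "c1 V \<sigma> \<Omega> = (\<integral>v. (M v *\<^sub>R v) \<bullet> \<Omega> \<partial>lborel)"
    unfolding c1_def by (rule Bochner_Integration.integral_cong) (auto simp: mult.commute)
  also have "\<dots> = J \<bullet> \<Omega>" unfolding J_def by (rule integral_inner_left) (use M_v_int in auto)
  also have "\<dots> = norm J"
  proof -
    have "J \<bullet> (J /\<^sub>R norm J) = (J \<bullet> J) / norm J" by (simp add: divide_inverse_commute)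
    also have "\<dots> = norm J" using J0 by (simp add: power2_norm_eq_inner[symmetric] power2_eq_square)
    finally show ?thesis using OmJ' by metis
  qed
  finally show "c1 V \<sigma> \<Omega> = norm (\<integral>v. M v *\<^sub>R v \<partial>lborel)" unfolding J_def .
  have "Omega_of M = J /\<^sub>R norm J" unfolding Omega_of_def Let_def J_def[symmetric] using J0 by simp
  then show "Omega_of M = \<Omega>" using OmJ' by simp
qed

end

context setting begin

lemma Om_deriv:
  assumes rho: "\<rho> > 0" and Om: "Omega_of (\<lambda>v. \<rho> * M v) = \<Omega>"
    and gint: "integrable lborel (\<lambda>v. g v *\<^sub>R v)"
  shows "((\<lambda>s. Omega_of (\<lambda>w. \<rho> * M w + s * g w) $ i) has_real_derivative
          (projP \<Omega> *v (\<integral>u. g u *\<^sub>R u \<partial>lborel)) $ i / (\<rho> * norm (\<integral>v. M v *\<^sub>R v \<partial>lborel))) (at 0)"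
proof -
  define J where "J = (\<integral>v. M v *\<^sub>R v \<partial>lborel)"
  define Jg where "Jg = (\<integral>u. g u *\<^sub>R u \<partial>lborel)"
  define n where "n = norm J"
  have J0: "J \<noteq> 0" and OmJ: "\<Omega> = J /\<^sub>R norm J"
    using Omega_facts[OF rho Om] unfolding J_def by auto
  have n0: "n > 0" using J0 n_def by simp
  have JOm: "J = n *\<^sub>R \<Omega>" using OmJ J0 n_def by simp
  have JJ: "(\<integral>w. (\<rho> * M w + s * g w) *\<^sub>R w \<partial>lborel) = \<rho> *\<^sub>R J + s *\<^sub>R Jg" for s
  proof -
    have "(\<integral>w. (\<rho> * M w + s * g w) *\<^sub>R w \<partial>lborel) = (\<integral>w. \<rho> *\<^sub>R (M w *\<^sub>R w) + s *\<^sub>R (g w *\<^sub>R w) \<partial>lborel)"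
      by (rule Bochner_Integration.integral_cong) (auto simp: scaleR_add_left)
    also have "\<dots> = (\<integral>w. \<rho> *\<^sub>R (M w *\<^sub>R w) \<partial>lborel) + (\<integral>w. s *\<^sub>R (g w *\<^sub>R w) \<partial>lborel)"
      by (rule Bochner_Integration.integral_add) (intro integrable_scaleR_right M_v_int gint)+
    also have "\<dots> = \<rho> *\<^sub>R J + s *\<^sub>R Jg"
      unfolding J_def Jg_def by (simp only: integral_scaleR_right)
    finally show ?thesis .
  qed
  have OO: "Omega_of (\<lambda>w. \<rho> * M w + s * g w) = (if \<rho> *\<^sub>R J + s *\<^sub>R Jg \<noteq> 0 then (\<rho> *\<^sub>R J + s *\<^sub>R Jg) /\<^sub>R norm (\<rho> *\<^sub>R J + s *\<^sub>R Jg) else 0)" for s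
    unfolding Omega_of_def Let_def JJ ..
  have rJ0: "\<rho> *\<^sub>R J \<noteq> 0" using rho J0 by simp
  define Dv where "Dv = (1 / norm (\<rho> *\<^sub>R J)) *\<^sub>R Jg - ((sgn (\<rho> *\<^sub>R J) \<bullet> Jg) / (norm (\<rho> *\<^sub>R J))^2) *\<^sub>R (\<rho> *\<^sub>R J)"
  have d1: "((\<lambda>s::real. inverse (norm (\<rho> *\<^sub>R J + s *\<^sub>R Jg)) *\<^sub>R (\<rho> *\<^sub>R J + s *\<^sub>R Jg)) has_derivative (\<lambda>h. h *\<^sub>R Dv)) (at 0)"
    unfolding Dv_def by (rule normalize_deriv[OF rJ0])
  have opn: "open {s::real. \<rho> *\<^sub>R J + s *\<^sub>R Jg \<noteq> 0}"
    by (rule open_Collect_neq) (auto intro!: continuous_intros)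
  have d2: "((\<lambda>s. Omega_of (\<lambda>w. \<rho> * M w + s * g w)) has_derivative (\<lambda>h. h *\<^sub>R Dv)) (at 0)"
    by (rule has_derivative_transform_within_open[OF d1 opn]) (use rJ0 OO in auto)
  have d3': "((\<lambda>s. Omega_of (\<lambda>w. \<rho> * M w + s * g w) $ i) has_derivative (\<lambda>h. h * Dv $ i)) (at 0)"
    using bounded_linear.has_derivative[OF bounded_linear_vec_nth d2, of i] by simp
  have ee: "(\<lambda>h. h * Dv $ i) = (*) (Dv $ i)" by (auto simp: fun_eq_iff)
  have d3: "((\<lambda>s. Omega_of (\<lambda>w. \<rho> * M w + s * g w) $ i) has_derivative (*) (Dv $ i)) (at 0)"
    using d3' unfolding ee .
  have Dv_eq: "Dv = (projP \<Omega> *v Jg) /\<^sub>R (\<rho> * n)"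
  proof -
    have nO: "norm \<Omega> = 1" by (rule Omega_unit)
    have s1: "sgn (\<rho> *\<^sub>R J) = \<Omega>" using rho n0 nO by (simp add: JOm sgn_scaleR sgn_div_norm field_simps)
    have s2: "norm (\<rho> *\<^sub>R J) = \<rho> * n" using rho n0 nO by (simp add: JOm)
    show ?thesis unfolding Dv_def s1 s2 projP_mult
      using rho n0 by (simp add: JOm power2_eq_square algebra_simps divide_inverse) (simp add: field_simps)
  qed
  show ?thesis
    unfolding has_field_derivative_def using d3
    by (simp add: Dv_eq J_def[symmetric] Jg_def[symmetric] n_def[symmetric] divide_inverse ac_simps)
qed

lemma part1:
  assumes rho: "\<rho> > 0" and Om: "Omega_of (\<lambda>v. \<rho> * M v) = \<Omega>"
    and gd: "\<And>w. g differentiable (at w)" and gdd: "\<And>i w. partial_i i g differentiable (at w)"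
    and gint: "integrable lborel (\<lambda>v. g v *\<^sub>R v)"
  shows "((\<lambda>s. Qop V \<sigma> (\<lambda>w. \<rho> * M w + s * g w) v) has_real_derivative
     divg (\<lambda>w. \<sigma> *\<^sub>R grad g w + g w *\<^sub>R grad (Phi V \<Omega>) w
        - (\<rho> * M w / (\<integral>u. (u \<bullet> \<Omega>) * (\<rho> * M u) \<partial>lborel)) *\<^sub>R (projP \<Omega> *v (\<integral>u. g u *\<^sub>R u \<partial>lborel))) v) (at 0)"
proof -
  define K where "K = (\<integral>u. (u \<bullet> \<Omega>) * (\<rho> * M u) \<partial>lborel)"
  define c where "c = projP \<Omega> *v (\<integral>u. g u *\<^sub>R u \<partial>lborel)"
  define n where "n = norm (\<integral>v. M v *\<^sub>R v \<partial>lborel)"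
  have Kn: "K = \<rho> * n"
  proof -
    have "K = (\<integral>u. \<rho> * ((u \<bullet> \<Omega>) * M u) \<partial>lborel)"
      unfolding K_def by (rule Bochner_Integration.integral_cong) auto
    also have "\<dots> = \<rho> * c1 V \<sigma> \<Omega>" unfolding c1_def by simp
    also have "\<dots> = \<rho> * n" using Omega_facts(3)[OF rho Om] n_def by simp
    finally show ?thesis .
  qed
  have hd: "\<And>s w. (\<lambda>w. \<rho> * M w + s * g w) differentiable (at w)"
    by (intro derivative_intros M_diff gd)
  have hp: "\<And>s i. partial_i i (\<lambda>w. \<rho> * M w + s * g w) = (\<lambda>w. \<rho> * partial_i i M w + s * partial_i i g w)"
    apply (rule ext)
    apply (rule pd_by)
     apply (rule derivative_eq_intros diff_hasD[OF gd] diff_hasD[OF M_diff] refl)+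
    apply simp
    done
  have hdd: "\<And>s i w. partial_i i (\<lambda>w. \<rho> * M w + s * g w) differentiable (at w)"
    unfolding hp by (intro derivative_intros dM_diff gdd)
  have hpp: "\<And>s i. partial_i i (partial_i i (\<lambda>w. \<rho> * M w + s * g w)) v
      = \<rho> * partial_i i (partial_i i M) v + s * partial_i i (partial_i i g) v"
    unfolding hp
    apply (rule pd_by)
     apply (rule derivative_eq_intros diff_hasD[OF gdd] diff_hasD[OF dM_diff] refl)+
    apply simp
    done
  have Q: "\<And>s. Qop V \<sigma> (\<lambda>w. \<rho> * M w + s * g w) v = (\<Sum>i\<in>UNIV.
      \<sigma> * (\<rho> * partial_i i (partial_i i M) v + s * partial_i i (partial_i i g) v)
      + (\<rho> * partial_i i M v + s * partial_i i g v) * (v$i - Omega_of (\<lambda>w. \<rho> * M w + s * g w) $ i)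
      + (\<rho> * M v + s * g v)
      + (\<rho> * partial_i i M v + s * partial_i i g v) * partial_i i Vn v
      + (\<rho> * M v + s * g v) * partial_i i (partial_i i Vn) v)"
    using Qop_formula[OF hd hdd] hp hpp by simp
  have OD: "\<And>i. ((\<lambda>s. Omega_of (\<lambda>w. \<rho> * M w + s * g w) $ i) has_real_derivative c $ i / (\<rho> * n)) (at 0)"
    using Om_deriv[OF rho Om gint] unfolding c_def n_def .
  have O0: "Omega_of (\<lambda>w. \<rho> * M w + 0 * g w) = \<Omega>" using Om by simp
  show ?thesis
    unfolding Q K_def[symmetric] c_def[symmetric]
  proof (rule DERIV_cong[OF DERIV_sum])
    fix i
    show "((\<lambda>s. \<sigma> * (\<rho> * partial_i i (partial_i i M) v + s * partial_i i (partial_i i g) v)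
      + (\<rho> * partial_i i M v + s * partial_i i g v) * (v$i - Omega_of (\<lambda>w. \<rho> * M w + s * g w) $ i)
      + (\<rho> * M v + s * g v)
      + (\<rho> * partial_i i M v + s * partial_i i g v) * partial_i i Vn v
      + (\<rho> * M v + s * g v) * partial_i i (partial_i i Vn) v) has_real_derivative
      (\<sigma> * partial_i i (partial_i i g) v + partial_i i g v * (v$i - \<Omega> $ i)
        - \<rho> * partial_i i M v * (c $ i / (\<rho> * n)) + g v + partial_i i g v * partial_i i Vn v
        + g v * partial_i i (partial_i i Vn) v)) (at 0)"
      apply (rule derivative_eq_intros OD refl)+
      apply (simp add: Om algebra_simps)
      done
  next
    show "(\<Sum>i\<in>UNIV. \<sigma> * partial_i i (partial_i i g) v + partial_i i g v * (v$i - \<Omega> $ i)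
        - \<rho> * partial_i i M v * (c $ i / (\<rho> * n)) + g v + partial_i i g v * partial_i i Vn v
        + g v * partial_i i (partial_i i Vn) v)
      = divg (\<lambda>w. \<sigma> *\<^sub>R grad g w + g w *\<^sub>R grad (Phi V \<Omega>) w - (\<rho> * M w / K) *\<^sub>R c) v"
      unfolding divG_formula[OF gd gdd] Kn
      by (rule sum.cong[OF refl]) (simp add: algebra_simps)
  qed
qed

end

lemma outer_row: "outer a b $ i = a $ i *\<^sub>R (b::real^'n::finite)"
  by (simp add: outer_def vec_eq_iff)

lemma norm_outer: "norm (outer a b) = norm a * norm (b::real^'n::finite)"
proof -
  have r: "norm (outer a b $ i) = norm b * \<bar>a $ i\<bar>" for i by (simp add: outer_row mult.commute)
  have "norm (outer a b) = L2_set (\<lambda>i. norm (outer a b $ i)) UNIV"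
    by (simp only: norm_vec_def[of "outer a b"])
  also have "\<dots> = L2_set (\<lambda>i. norm b * \<bar>a $ i\<bar>) UNIV" by (simp only: r)
  also have "\<dots> = norm b * L2_set (\<lambda>i. \<bar>a $ i\<bar>) UNIV"
    by (simp add: L2_set_right_distrib)
  also have "L2_set (\<lambda>i. \<bar>a $ i\<bar>) UNIV = norm a" by (simp add: norm_vec_def[of a])
  finally show ?thesis by (simp add: mult.commute)
qed

lemma norm_projP: "norm \<Omega> = 1 \<Longrightarrow> norm (projP \<Omega> *v x) \<le> 2 * norm (x::real^'n::finite)"
proof -
  assume n: "norm \<Omega> = 1"
  have "norm (projP \<Omega> *v x) \<le> norm x + norm ((\<Omega> \<bullet> x) *\<^sub>R \<Omega>)"
    unfolding projP_mult by (rule norm_triangle_ineq4)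
  also have "norm ((\<Omega> \<bullet> x) *\<^sub>R \<Omega>) = \<bar>\<Omega> \<bullet> x\<bar>" using n by simp
  also have "\<bar>\<Omega> \<bullet> x\<bar> \<le> norm x" using Cauchy_Schwarz_ineq2[of \<Omega> x] n by simp
  finally show ?thesis by simp
qed

lemma projP_Omega: "norm \<Omega> = 1 \<Longrightarrow> projP \<Omega> *v \<Omega> = (0::real^'n::finite)"
  by (simp add: projP_mult power2_norm_eq_inner[symmetric])

context setting begin

lemma part3:
  assumes rho: "\<rho> > 0" and Om: "Omega_of (\<lambda>v. \<rho> * M v) = \<Omega>"
  shows "Lin V \<sigma> (\<lambda>v. \<rho> * M v) (\<lambda>w. \<rho> * M w * (w - \<Omega>) $ i) v
     = \<sigma> * partial_i i (\<lambda>v. \<rho> * M v) v - divg (\<lambda>w. (\<rho> * M w / c1 V \<sigma> \<Omega>) *\<^sub>R (pressure V \<sigma> \<Omega> $ i)) v"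
proof -
  define g where "g = (\<lambda>w. \<rho> * M w * (w$i - \<Omega>$i))"
  have geq: "(\<lambda>w. \<rho> * M w * (w - \<Omega>) $ i) = g" unfolding g_def by simp
  define n where "n = norm (\<integral>v. M v *\<^sub>R v \<partial>lborel)"
  have c1n: "c1 V \<sigma> \<Omega> = n" using Omega_facts(3)[OF rho Om] n_def by simp
  have n0: "n > 0" using Omega_facts(1)[OF rho Om] n_def by simp
  define K where "K = (\<integral>u. (u \<bullet> \<Omega>) * (\<rho> * M u) \<partial>lborel)"
  have Kn: "K = \<rho> * n"
  proof -
    have "K = (\<integral>u. \<rho> * ((u \<bullet> \<Omega>) * M u) \<partial>lborel)"
      unfolding K_def by (rule Bochner_Integration.integral_cong) auto
    also have "\<dots> = \<rho> * c1 V \<sigma> \<Omega>" unfolding c1_def by simp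
    finally show ?thesis using c1n by simp
  qed
  have gd: "\<And>w. g differentiable (at w)"
    unfolding g_def by (intro derivative_intros M_diff diff_coord)
  have gp: "\<And>j. partial_i j g = (\<lambda>w. \<rho> * partial_i j M w * (w$i - \<Omega>$i) + \<rho> * M w * (if j = i then 1 else 0))"
    unfolding g_def
    apply (rule ext)
    apply (rule pd_by)
     apply (rule derivative_eq_intros diff_hasD[OF M_diff] hasD_coord refl)+
    apply (simp add: algebra_simps)
    done
  have gdd: "\<And>j w. partial_i j g differentiable (at w)"
    unfolding gp by (intro derivative_intros dM_diff diff_coord M_diff)
  have gmeas: "(\<lambda>v. g v *\<^sub>R v) \<in> borel_measurable lborel"
    unfolding g_def using M_meas by measurable
  have gint: "integrable lborel (\<lambda>v. g v *\<^sub>R v)"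
  proof (rule mom_int[OF gmeas, where a="2*\<rho>" and b=\<rho>])
    fix v
    have a: "\<bar>v$i - \<Omega>$i\<bar> \<le> norm v + 1"
    proof -
      have "\<bar>v$i - \<Omega>$i\<bar> = \<bar>(v - \<Omega>)$i\<bar>" by simp
      also have "\<dots> \<le> norm (v - \<Omega>)" by (rule component_le_norm_cart)
      also have "\<dots> \<le> norm v + norm \<Omega>" by (rule norm_triangle_ineq4)
      finally show ?thesis using Omega_unit by simp
    qed
    have "norm (g v *\<^sub>R v) = \<rho> * M v * (\<bar>v$i - \<Omega>$i\<bar> * norm v)"
      unfolding g_def using rho M_pos[of v] by (simp add: abs_mult)
    also have "\<dots> \<le> \<rho> * M v * ((norm v + 1) * norm v)"
      using rho M_pos[of v] a by (intro mult_left_mono mult_right_mono) auto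
    also have "\<dots> \<le> \<rho> * M v * (2 * (norm v)\<^sup>2 + 1)"
      using rho M_pos[of v] norm_le_sq[of v] by (intro mult_left_mono) (auto simp: power2_eq_square algebra_simps)
    also have "\<dots> = M v * (2 * \<rho> * (norm v)\<^sup>2 + \<rho>)" by (simp add: algebra_simps)
    finally show "norm (g v *\<^sub>R v) \<le> M v * (2 * \<rho> * (norm v)\<^sup>2 + \<rho>)" .
  qed
  define c where "c = projP \<Omega> *v (\<integral>u. g u *\<^sub>R u \<partial>lborel)"
  have Lin_eq: "Lin V \<sigma> (\<lambda>v. \<rho> * M v) g v = divg (\<lambda>w. \<sigma> *\<^sub>R grad g w + g w *\<^sub>R grad (Phi V \<Omega>) w
        - (\<rho> * M w / K) *\<^sub>R c) v"
    unfolding Lin_def K_def c_def by (rule DERIV_imp_deriv[OF part1[OF rho Om gd gdd gint]])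
  have Geq: "(\<lambda>w. \<sigma> *\<^sub>R grad g w + g w *\<^sub>R grad (Phi V \<Omega>) w - (\<rho> * M w / K) *\<^sub>R c)
      = (\<lambda>w. (\<sigma> * \<rho> * M w) *\<^sub>R axis i 1 - (\<rho> * M w / K) *\<^sub>R c)"
  proof (rule ext)
    fix w
    show "\<sigma> *\<^sub>R grad g w + g w *\<^sub>R grad (Phi V \<Omega>) w - (\<rho> * M w / K) *\<^sub>R c
      = (\<sigma> * \<rho> * M w) *\<^sub>R axis i 1 - (\<rho> * M w / K) *\<^sub>R c"
    proof -
      have gw: "g w = \<rho> * M w * (w$i - \<Omega>$i)" by (simp add: g_def)
      show ?thesis using sigma_pos by (simp add: vec_eq_iff grad_def gp dM dPhi gw field_simps)
    qed
  qed
  have cP: "c = \<rho> *\<^sub>R (pressure V \<sigma> \<Omega> $ i)"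
  proof -
    have pint: "integrable lborel (\<lambda>v. M v *\<^sub>R outer (v - \<Omega>) (projP \<Omega> *v (v - \<Omega>)))"
    proof (rule mom_int[where a=4 and b=4])
      show "(\<lambda>v. M v *\<^sub>R outer (v - \<Omega>) (projP \<Omega> *v (v - \<Omega>))) \<in> borel_measurable lborel"
      proof -
        have l: "continuous_on UNIV ((*v) (projP \<Omega>))"
          by (rule linear_continuous_on[OF matrix_vector_mul_bounded_linear])
        have pc: "continuous_on UNIV (\<lambda>x. projP \<Omega> *v (x - \<Omega>))"
          using continuous_on_compose[of UNIV "\<lambda>x. x - \<Omega>" "(*v) (projP \<Omega>)"] l
          by (simp add: o_def continuous_intros continuous_on_subset)
        have c: "continuous_on UNIV (\<lambda>v. outer (v - \<Omega>) (projP \<Omega> *v (v - \<Omega>)))"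
          unfolding outer_def
          by (intro continuous_on_vec_lambda continuous_intros pc)
        show ?thesis using M_meas meas_of_cont[OF c] by measurable
      qed
    next
      fix v
      have "norm (M v *\<^sub>R outer (v - \<Omega>) (projP \<Omega> *v (v - \<Omega>))) = M v * (norm (v - \<Omega>) * norm (projP \<Omega> *v (v - \<Omega>)))"
        using M_pos[of v] by (simp add: norm_outer)
      also have "\<dots> \<le> M v * (norm (v - \<Omega>) * (2 * norm (v - \<Omega>)))"
        using M_pos[of v] norm_projP[OF Omega_unit] by (intro mult_left_mono) auto
      also have "\<dots> \<le> M v * (4 * (norm v)\<^sup>2 + 4)"
      proof -
        have "norm (v - \<Omega>) \<le> norm v + 1" using norm_triangle_ineq4[of v \<Omega>] Omega_unit by simp
        then have "(norm (v - \<Omega>))\<^sup>2 \<le> (norm v + 1)\<^sup>2" by (intro power_mono) auto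
        also have "\<dots> \<le> 2 * (norm v)\<^sup>2 + 2"
        proof -
          have "0 \<le> (norm v - 1)\<^sup>2" by simp
          then show ?thesis by (simp add: power2_eq_square algebra_simps)
        qed
        finally have "norm (v - \<Omega>) * (2 * norm (v - \<Omega>)) \<le> 4 * (norm v)\<^sup>2 + 4"
          by (simp add: power2_eq_square)
        then show ?thesis using M_pos[of v] by (intro mult_left_mono) auto
      qed
      finally show "norm (M v *\<^sub>R outer (v - \<Omega>) (projP \<Omega> *v (v - \<Omega>))) \<le> M v * (4 * (norm v)\<^sup>2 + 4)" .
    qed
    have "pressure V \<sigma> \<Omega> $ i = (\<integral>v. (M v *\<^sub>R outer (v - \<Omega>) (projP \<Omega> *v (v - \<Omega>))) $ i \<partial>lborel)"
      unfolding pressure_def by (rule integral_bounded_linear[OF bounded_linear_vec_nth pint, symmetric])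
    also have "\<dots> = (\<integral>v. (M v * (v$i - \<Omega>$i)) *\<^sub>R (projP \<Omega> *v v) \<partial>lborel)"
      by (rule Bochner_Integration.integral_cong)
        (auto simp: outer_row matrix_vector_mult_diff_distrib projP_Omega[OF Omega_unit])
    finally have pe: "pressure V \<sigma> \<Omega> $ i = (\<integral>v. (M v * (v$i - \<Omega>$i)) *\<^sub>R (projP \<Omega> *v v) \<partial>lborel)" .
    have "c = (\<integral>u. projP \<Omega> *v (g u *\<^sub>R u) \<partial>lborel)"
      unfolding c_def by (rule integral_bounded_linear[OF matrix_vector_mul_bounded_linear gint, symmetric])
    also have "\<dots> = (\<integral>u. \<rho> *\<^sub>R ((M u * (u$i - \<Omega>$i)) *\<^sub>R (projP \<Omega> *v u)) \<partial>lborel)"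
      by (rule Bochner_Integration.integral_cong) (auto simp: g_def matrix_vector_mult_scaleR)
    also have "\<dots> = \<rho> *\<^sub>R (pressure V \<sigma> \<Omega> $ i)" unfolding pe by (simp only: integral_scaleR_right)
    finally show ?thesis .
  qed
  have L: "divg (\<lambda>w. (\<sigma> * \<rho> * M w) *\<^sub>R axis i 1 - (\<rho> * M w / K) *\<^sub>R c) v
      = (\<Sum>j\<in>UNIV. \<sigma> * \<rho> * partial_i j M v * (if j = i then 1 else 0) - partial_i j M v * (\<rho> * c $ j / K))"
    unfolding divg_def
  proof (rule sum.cong[OF refl])
    fix j
    have e: "(\<lambda>w. ((\<sigma> * \<rho> * M w) *\<^sub>R axis i 1 - (\<rho> * M w / K) *\<^sub>R c) $ j)
      = (\<lambda>w. M w * (\<sigma> * \<rho> * (if j = i then 1 else 0)) - M w * (\<rho> * c $ j / K))"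
      by (auto simp: fun_eq_iff)
    show "partial_i j (\<lambda>w. ((\<sigma> * \<rho> * M w) *\<^sub>R axis i 1 - (\<rho> * M w / K) *\<^sub>R c) $ j) v
      = \<sigma> * \<rho> * partial_i j M v * (if j = i then 1 else 0) - partial_i j M v * (\<rho> * c $ j / K)"
      unfolding e
      apply (rule pd_by)
       apply (rule derivative_eq_intros diff_hasD[OF M_diff] refl)+
      apply (simp add: algebra_simps)
      done
  qed
  have R: "divg (\<lambda>w. (\<rho> * M w / c1 V \<sigma> \<Omega>) *\<^sub>R (pressure V \<sigma> \<Omega> $ i)) v
      = (\<Sum>j\<in>UNIV. partial_i j M v * (\<rho> * pressure V \<sigma> \<Omega> $ i $ j / c1 V \<sigma> \<Omega>))"
    unfolding divg_def
  proof (rule sum.cong[OF refl])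
    fix j
    have e: "(\<lambda>w. ((\<rho> * M w / c1 V \<sigma> \<Omega>) *\<^sub>R (pressure V \<sigma> \<Omega> $ i)) $ j)
      = (\<lambda>w. M w * (\<rho> * pressure V \<sigma> \<Omega> $ i $ j / c1 V \<sigma> \<Omega>))"
      by (auto simp: fun_eq_iff)
    show "partial_i j (\<lambda>w. ((\<rho> * M w / c1 V \<sigma> \<Omega>) *\<^sub>R (pressure V \<sigma> \<Omega> $ i)) $ j) v
      = partial_i j M v * (\<rho> * pressure V \<sigma> \<Omega> $ i $ j / c1 V \<sigma> \<Omega>)"
      unfolding e
      apply (rule pd_by)
       apply (rule derivative_eq_intros diff_hasD[OF M_diff] refl)+
      apply (simp add: algebra_simps)
      done
  qed
  have pi: "partial_i i (\<lambda>v. \<rho> * M v) v = \<rho> * partial_i i M v"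
    apply (rule pd_by)
     apply (rule derivative_eq_intros diff_hasD[OF M_diff] refl)+
    apply simp
    done
  have sum_if: "(\<Sum>j\<in>UNIV. \<sigma> * \<rho> * partial_i j M v * (if j = i then 1 else 0)) = \<sigma> * \<rho> * partial_i i M v"
    by (simp add: if_distrib cong: if_cong)
  show ?thesis
    unfolding geq Lin_eq Geq L R pi
    using rho n0 sum_if c1n
    by (simp add: sum_subtractf cP Kn)
qed

end

lemma cs_int:
  fixes h :: "real^'n::finite \<Rightarrow> 'b::{banach, second_countable_topology}"
  assumes "continuous_on UNIV h" "compact K" "\<And>v. v \<notin> K \<Longrightarrow> h v = 0"
  shows "integrable lborel h"
proof -
  have "integrable lborel (\<lambda>x. indicator K x *\<^sub>R h x)"
    by (rule borel_integrable_compact[OF assms(2)]) (rule continuous_on_subset[OF assms(1)], simp)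
  moreover have "(\<lambda>x. indicator K x *\<^sub>R h x) = h"
    using assms(3) by (auto simp: fun_eq_iff indicator_def)
  ultimately show ?thesis by simp
qed

lemma pd_zero_outside:
  fixes h :: "real^'n::finite \<Rightarrow> real"
  assumes "closed K" "\<And>v. v \<notin> K \<Longrightarrow> h v = 0" "v \<notin> K"
  shows "partial_i i h v = 0"
proof -
  have "((\<lambda>w. 0::real) has_derivative (\<lambda>d. 0)) (at v)" by simp
  then have "(h has_derivative (\<lambda>d. 0)) (at v)"
    by (rule has_derivative_transform_within_open[where s="- K"]) (use assms in auto)
  then show ?thesis by (simp add: pd_hasD)
qed

lemma hasD_line:
  fixes H :: "real^'n::finite \<Rightarrow> real"
  assumes Hd: "\<And>v. H differentiable (at v)"
  shows "((\<lambda>t. H (t *\<^sub>R axis i 1 + v)) has_real_derivative partial_i i H (x *\<^sub>R axis i 1 + v)) (at x)"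
proof -
  have a: "((\<lambda>t::real. t *\<^sub>R axis i 1 + v) has_derivative (\<lambda>h. h *\<^sub>R axis i 1)) (at x)"
    by (auto intro!: derivative_eq_intros)
  have b: "(H has_derivative (\<lambda>d. grad H (x *\<^sub>R axis i 1 + v) \<bullet> d)) (at ((\<lambda>t::real. t *\<^sub>R axis i 1 + v) x))"
    using diff_hasD[OF Hd] by simp
  have "((\<lambda>t. H (t *\<^sub>R axis i 1 + v)) has_derivative (\<lambda>h. h * partial_i i H (x *\<^sub>R axis i 1 + v))) (at x)"
    using has_derivative_compose[OF a b] by simp
  moreover have "(\<lambda>h. h * partial_i i H (x *\<^sub>R axis i 1 + v)) = (*) (partial_i i H (x *\<^sub>R axis i 1 + v))"
    by (auto simp: fun_eq_iff)
  ultimately show ?thesis unfolding has_field_derivative_def by simp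
qed

lemma int_partial_zero:
  fixes H :: "real^'n::finite \<Rightarrow> real"
  assumes Hd: "\<And>v. H differentiable (at v)" and Hc: "continuous_on UNIV (partial_i i H)"
    and K: "compact K" and HK: "\<And>v. v \<notin> K \<Longrightarrow> H v = 0"
  shows "(\<integral>v. partial_i i H v \<partial>lborel) = 0"
proof -
  define e :: "real^'n" where "e = axis i 1"
  have ne: "norm e = 1" unfolding e_def by simp
  define K1 where "K1 = {x + y | x y. x \<in> K \<and> y \<in> cball (0::real^'n) 1}"
  define K2 where "K2 = {x + y | x y. x \<in> K1 \<and> y \<in> cball (0::real^'n) 1}"
  have cK1: "compact K1" unfolding K1_def by (intro compact_sums K compact_cball)
  have cK2: "compact K2" unfolding K2_def by (intro compact_sums cK1 compact_cball)
  have KK1: "\<And>x y. x \<in> K \<Longrightarrow> norm y \<le> 1 \<Longrightarrow> x + y \<in> K1" unfolding K1_def by force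
  have KK2: "\<And>x y. x \<in> K1 \<Longrightarrow> norm y \<le> 1 \<Longrightarrow> x + y \<in> K2" unfolding K2_def by force
  obtain B where B: "\<And>x. x \<in> K2 \<Longrightarrow> norm (partial_i i H x) \<le> B"
    using compact_imp_bounded[OF compact_continuous_image[OF continuous_on_subset[OF Hc] cK2]]
    unfolding bounded_iff by blast
  have Hcont: "continuous_on UNIV H" using Hd cont_of_diff by blast
  have Hint: "integrable lborel H" by (rule cs_int[OF Hcont K HK])
  define t :: "nat \<Rightarrow> real" where "t n = 1 / Suc n" for n
  have t0: "t n > 0" "t n \<le> 1" for n unfolding t_def by (auto simp: field_simps)
  define s where "s n v = (H (t n *\<^sub>R e + v) - H v) / t n" for n v
  have tr: "(\<integral>v. H (c + v) \<partial>lborel) = (\<integral>v. H v \<partial>lborel)" for c :: "real^'n"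
  proof -
    have "(\<integral>v. H v \<partial>lborel) = (\<integral>v. H v \<partial>(distr lborel borel ((+) c)))"
      by (simp add: lborel_distr_plus)
    also have "\<dots> = (\<integral>v. H (c + v) \<partial>lborel)"
      by (rule integral_distr) (auto intro: borel_measurable_continuous_onI[OF Hcont])
    finally show ?thesis by simp
  qed
  have Hint': "integrable lborel (\<lambda>v. H (c + v))" for c :: "real^'n"
  proof -
    have "integrable (distr lborel borel ((+) c)) H" using Hint by (simp add: lborel_distr_plus)
    then show ?thesis
      by (subst (asm) integrable_distr_eq) (auto intro: borel_measurable_continuous_onI[OF Hcont])
  qed
  have sint: "(\<integral>v. s n v \<partial>lborel) = 0" for n
  proof -
    have "(\<integral>v. s n v \<partial>lborel) = ((\<integral>v. H (t n *\<^sub>R e + v) \<partial>lborel) - (\<integral>v. H v \<partial>lborel)) / t n"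
      unfolding s_def using Hint Hint' by simp
    then show ?thesis using tr by simp
  qed
  have lim: "(\<lambda>n. s n v) \<longlonglongrightarrow> partial_i i H v" for v
  proof -
    have d: "((\<lambda>x. H (x *\<^sub>R e + v)) has_real_derivative partial_i i H (0 *\<^sub>R e + v)) (at 0)"
      unfolding e_def by (rule hasD_line[OF Hd])
    then have A: "((\<lambda>h. (H (h *\<^sub>R e + v) - H v) / h) \<longlongrightarrow> partial_i i H v) (at 0)"
      unfolding has_field_derivative_iff by simp
    have B: "filterlim t (at 0) sequentially"
    proof -
      have "t \<longlonglongrightarrow> 0" unfolding t_def using LIMSEQ_inverse_real_of_nat by (simp add: inverse_eq_divide)
      moreover have "\<forall>\<^sub>F x in sequentially. t x \<noteq> 0" using t0 by (simp add: less_imp_neq[symmetric])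
      ultimately show ?thesis by (auto simp: filterlim_at)
    qed
    show ?thesis using filterlim_compose[OF A B] unfolding s_def by simp
  qed
  have bound: "norm (s n v) \<le> B * indicator K1 v" for n v
  proof (cases "v \<in> K1")
    case False
    have "v \<notin> K"
    proof
      assume "v \<in> K" then have "v + 0 \<in> K1" by (intro KK1) auto
      with False show False by simp
    qed
    moreover have "t n *\<^sub>R e + v \<notin> K"
    proof
      assume a: "t n *\<^sub>R e + v \<in> K"
      have "norm (- (t n *\<^sub>R e)) \<le> 1" using t0[of n] ne by simp
      from KK1[OF a this] have "v \<in> K1" by simp
      with False show False by simp
    qed
    ultimately show ?thesis unfolding s_def using False HK by simp
  next
    case True
    obtain z where z: "0 < z" "z < t n"
      and eq: "H (t n *\<^sub>R e + v) - H (0 *\<^sub>R e + v) = (t n - 0) * partial_i i H (z *\<^sub>R e + v)"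
      using MVT2[OF t0(1)[of n], of "\<lambda>x. H (x *\<^sub>R e + v)" "\<lambda>x. partial_i i H (x *\<^sub>R e + v)"]
        hasD_line[OF Hd] unfolding e_def by blast
    have "z *\<^sub>R e + v \<in> K2"
    proof -
      have "norm (z *\<^sub>R e) \<le> 1" using z t0[of n] ne by simp
      from KK2[OF True this] show ?thesis by (simp add: add.commute)
    qed
    then have "norm (partial_i i H (z *\<^sub>R e + v)) \<le> B" by (rule B)
    moreover have "s n v = partial_i i H (z *\<^sub>R e + v)" unfolding s_def using eq t0[of n] by simp
    ultimately show ?thesis using True by simp
  qed
  have conv: "(\<lambda>n. \<integral>v. s n v \<partial>lborel) \<longlonglongrightarrow> (\<integral>v. partial_i i H v \<partial>lborel)"
  proof (rule integral_dominated_convergence[where w="\<lambda>v. B * indicator K1 v"])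
    show "partial_i i H \<in> borel_measurable lborel" by (rule meas_of_cont[OF Hc])
    show "s n \<in> borel_measurable lborel" for n
      unfolding s_def[abs_def] using meas_of_cont[OF Hcont] by measurable
    show "integrable lborel (\<lambda>v. B * indicator K1 v)"
      using cK1 by (auto intro!: integrable_mult_right emeasure_compact_finite borel_compact)
    show "AE v in lborel. (\<lambda>n. s n v) \<longlonglongrightarrow> partial_i i H v" using lim by simp
    show "AE v in lborel. norm (s n v) \<le> B * indicator K1 v" for n using bound by simp
  qed
  then show ?thesis using sint LIMSEQ_unique by (simp add: LIMSEQ_const_iff)
qed

lemma ibp:
  fixes h1 h2 :: "real^'n::finite \<Rightarrow> real"
  assumes h1d: "\<And>v. h1 differentiable (at v)" and h2d: "\<And>v. h2 differentiable (at v)"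
    and h1c: "continuous_on UNIV (partial_i i h1)" and h2c: "continuous_on UNIV (partial_i i h2)"
    and K: "compact K" and h2K: "\<And>v. v \<notin> K \<Longrightarrow> h2 v = 0"
  shows "(\<integral>v. partial_i i h1 v * h2 v \<partial>lborel) = - (\<integral>v. h1 v * partial_i i h2 v \<partial>lborel)"
proof -
  have pH: "partial_i i (\<lambda>v. h1 v * h2 v) = (\<lambda>v. partial_i i h1 v * h2 v + h1 v * partial_i i h2 v)"
    using pd_mult[OF h1d h2d] by auto
  have c1: "continuous_on UNIV h1" using h1d cont_of_diff by blast
  have c2: "continuous_on UNIV h2" using h2d cont_of_diff by blast
  have z2: "\<And>v. v \<notin> K \<Longrightarrow> partial_i i h2 v = 0"
    using pd_zero_outside[OF compact_imp_closed[OF K], of h2] h2K by blast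
  have i1: "integrable lborel (\<lambda>v. partial_i i h1 v * h2 v)"
    by (rule cs_int[OF _ K]) (auto intro!: continuous_intros h1c c2 simp: h2K)
  have i2: "integrable lborel (\<lambda>v. h1 v * partial_i i h2 v)"
    by (rule cs_int[OF _ K]) (auto intro!: continuous_intros c1 h2c simp: z2)
  have "(\<integral>v. partial_i i (\<lambda>v. h1 v * h2 v) v \<partial>lborel) = 0"
  proof (rule int_partial_zero[OF _ _ K])
    show "(\<lambda>v. h1 v * h2 v) differentiable (at v)" for v using h1d h2d by simp
    show "continuous_on UNIV (partial_i i (\<lambda>v. h1 v * h2 v))"
      unfolding pH by (intro continuous_intros h1c h2c c1 c2)
    show "v \<notin> K \<Longrightarrow> h1 v * h2 v = 0" for v using h2K by simp
  qed
  then have "(\<integral>v. partial_i i h1 v * h2 v \<partial>lborel) + (\<integral>v. h1 v * partial_i i h2 v \<partial>lborel) = 0"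
    unfolding pH using i1 i2 by simp
  then show ?thesis by simp
qed

lemma projP_sym: "(projP \<Omega> *v x) \<bullet> y = x \<bullet> (projP \<Omega> *v (y::real^'n::finite))"
  unfolding projP_mult inner_diff_left inner_diff_right inner_scaleR_left inner_scaleR_right
  by (simp add: inner_commute)

lemma C2_parts:
  assumes "C2 h"
  shows "\<And>v. h differentiable (at v)" "\<And>i v. partial_i i h differentiable (at v)"
    "\<And>i j. continuous_on UNIV (partial_i j (partial_i i h))"
    "continuous_on UNIV h" "\<And>i. continuous_on UNIV (partial_i i h)"
  using assms unfolding C2_def by (auto intro: cont_of_diff)

lemma cs_parts:
  fixes h :: "real^'n::finite \<Rightarrow> real"
  assumes "compact_supp h"
  shows "compact (closure {v. h v \<noteq> 0})" "\<And>v. v \<notin> closure {v. h v \<noteq> 0} \<Longrightarrow> h v = 0"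
    "\<And>i v. v \<notin> closure {v. h v \<noteq> 0} \<Longrightarrow> partial_i i h v = 0"
proof -
  show "compact (closure {v. h v \<noteq> 0})" using assms unfolding compact_supp_def .
  show z: "\<And>v. v \<notin> closure {v. h v \<noteq> 0} \<Longrightarrow> h v = 0"
  proof -
    fix v assume "v \<notin> closure {v. h v \<noteq> 0}"
    then have "v \<notin> {v. h v \<noteq> 0}" using closure_subset[of "{v. h v \<noteq> 0}"] by (meson subsetD)
    then show "h v = 0" by simp
  qed
  show "\<And>i v. v \<notin> closure {v. h v \<noteq> 0} \<Longrightarrow> partial_i i h v = 0"
  proof -
    fix i v assume a: "v \<notin> closure {v. h v \<noteq> 0}"
    show "partial_i i h v = 0" by (rule pd_zero_outside[OF closed_closure _ a]) (rule z)
  qed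
qed

context setting begin

lemma part2:
  assumes rho: "\<rho> > 0" and Om: "Omega_of (\<lambda>v. \<rho> * M v) = \<Omega>"
    and gC: "C2 g" and gs: "compact_supp g" and pC: "C2 \<psi>" and ps: "compact_supp \<psi>"
  shows "integrable lborel (\<lambda>v. Lin V \<sigma> (\<lambda>v. \<rho> * M v) g v * \<psi> v)
        \<and> integrable lborel (\<lambda>v. g v *
             (\<sigma> * divg (\<lambda>w. M w *\<^sub>R grad \<psi> w) v / M v
              + (projP \<Omega> *v v) \<bullet> ((\<integral>w. M w *\<^sub>R grad \<psi> w \<partial>lborel) /\<^sub>R c1 V \<sigma> \<Omega>)))
        \<and> (\<integral>v. Lin V \<sigma> (\<lambda>v. \<rho> * M v) g v * \<psi> v \<partial>lborel)
          = (\<integral>v. g v *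
             (\<sigma> * divg (\<lambda>w. M w *\<^sub>R grad \<psi> w) v / M v
              + (projP \<Omega> *v v) \<bullet> ((\<integral>w. M w *\<^sub>R grad \<psi> w \<partial>lborel) /\<^sub>R c1 V \<sigma> \<Omega>))
             \<partial>lborel)"
proof -
  note gd = C2_parts(1)[OF gC] and gdd = C2_parts(2)[OF gC] and gddc = C2_parts(3)[OF gC]
    and gc = C2_parts(4)[OF gC] and gpc = C2_parts(5)[OF gC]
  note pd = C2_parts(1)[OF pC] and pdd = C2_parts(2)[OF pC] and pddc = C2_parts(3)[OF pC]
    and pc = C2_parts(4)[OF pC] and ppc = C2_parts(5)[OF pC]
  define Kg where "Kg = closure {v. g v \<noteq> 0}"
  define Kp where "Kp = closure {v. \<psi> v \<noteq> 0}"
  have cKg: "compact Kg" unfolding Kg_def by (rule cs_parts(1)[OF gs])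
  have g0: "\<And>v. v \<notin> Kg \<Longrightarrow> g v = 0" unfolding Kg_def by (rule cs_parts(2)[OF gs])
  have gp0: "\<And>i v. v \<notin> Kg \<Longrightarrow> partial_i i g v = 0" unfolding Kg_def by (rule cs_parts(3)[OF gs])
  have cKp: "compact Kp" unfolding Kp_def by (rule cs_parts(1)[OF ps])
  have p0: "\<And>v. v \<notin> Kp \<Longrightarrow> \<psi> v = 0" unfolding Kp_def by (rule cs_parts(2)[OF ps])
  have pp0: "\<And>i v. v \<notin> Kp \<Longrightarrow> partial_i i \<psi> v = 0" unfolding Kp_def by (rule cs_parts(3)[OF ps])
  have gint: "integrable lborel (\<lambda>v. g v *\<^sub>R v)"
    by (rule cs_int[OF continuous_on_scaleR[OF gc continuous_on_id] cKg]) (simp add: g0)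
  define n where "n = norm (\<integral>v. M v *\<^sub>R v \<partial>lborel)"
  have c1n: "c1 V \<sigma> \<Omega> = n" using Omega_facts(3)[OF rho Om] n_def by simp
  have n0: "n > 0" using Omega_facts(1)[OF rho Om] n_def by simp
  define K where "K = (\<integral>u. (u \<bullet> \<Omega>) * (\<rho> * M u) \<partial>lborel)"
  have Kn: "K = \<rho> * n"
  proof -
    have "K = (\<integral>u. \<rho> * ((u \<bullet> \<Omega>) * M u) \<partial>lborel)"
      unfolding K_def by (rule Bochner_Integration.integral_cong) auto
    also have "\<dots> = \<rho> * c1 V \<sigma> \<Omega>" unfolding c1_def by simp
    finally show ?thesis using c1n by simp
  qed
  define c where "c = projP \<Omega> *v (\<integral>u. g u *\<^sub>R u \<partial>lborel)"
  define gP where "gP i = (\<lambda>w. g w * partial_i i (Phi V \<Omega>) w)" for i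
  have dPc: "continuous_on UNIV (partial_i i (Phi V \<Omega>))" for i using dPhi_diff cont_of_diff by blast
  have gPd: "gP i differentiable (at v)" for i v unfolding gP_def by (intro differentiable_mult gd dPhi_diff)
  have gPp: "partial_i i (gP i) = (\<lambda>v. partial_i i g v * partial_i i (Phi V \<Omega>) v + g v * (1 + partial_i i (partial_i i Vn) v))" for i
    unfolding gP_def by (rule ext) (simp add: pd_mult[OF gd dPhi_diff] ddPhi)
  have gPpc: "continuous_on UNIV (partial_i i (gP i))" for i
    unfolding gPp by (intro continuous_intros gpc dPc gc ddVn_cont)
  have Lin_eq: "Lin V \<sigma> (\<lambda>v. \<rho> * M v) g v = (\<Sum>i\<in>UNIV. \<sigma> * partial_i i (partial_i i g) v
      + partial_i i (gP i) v - c $ i / n * partial_i i M v)" for v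
  proof -
    have "Lin V \<sigma> (\<lambda>v. \<rho> * M v) g v = divg (\<lambda>w. \<sigma> *\<^sub>R grad g w + g w *\<^sub>R grad (Phi V \<Omega>) w
        - (\<rho> * M w / K) *\<^sub>R c) v"
      unfolding Lin_def K_def c_def by (rule DERIV_imp_deriv[OF part1[OF rho Om gd gdd gint]])
    also have "\<dots> = (\<Sum>i\<in>UNIV. \<sigma> * partial_i i (partial_i i g) v
      + partial_i i (gP i) v - c $ i / n * partial_i i M v)"
      unfolding divG_formula[OF gd gdd] gPp Kn dPhi
      using rho n0 by (intro sum.cong refl) (simp add: field_simps)
    finally show ?thesis .
  qed
  have Mc: "continuous_on UNIV M" by (rule M_cont)
  have gradc: "continuous_on UNIV (grad \<psi>)"
    unfolding grad_def[abs_def] by (intro continuous_on_vec_lambda ppc)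
  have grad0: "\<And>v. v \<notin> Kp \<Longrightarrow> grad \<psi> v = 0"
    by (simp add: grad_def vec_eq_iff pp0)
  have I1: "integrable lborel (\<lambda>v. partial_i i (partial_i i g) v * \<psi> v)" for i
    by (rule cs_int[OF _ cKp]) (intro continuous_intros gddc pc, simp add: p0)
  have I2: "integrable lborel (\<lambda>v. partial_i i (gP i) v * \<psi> v)" for i
    by (rule cs_int[OF _ cKp]) (intro continuous_intros gPpc pc, simp add: p0)
  have I3: "integrable lborel (\<lambda>v. partial_i i M v * \<psi> v)" for i
    by (rule cs_int[OF _ cKp]) (intro continuous_intros dM_cont pc, simp add: p0)
  have I4: "integrable lborel (\<lambda>v. partial_i i (partial_i i \<psi>) v * g v)" for i
    by (rule cs_int[OF _ cKg]) (intro continuous_intros pddc gc, simp add: g0)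
  have I5: "integrable lborel (\<lambda>v. gP i v * partial_i i \<psi> v)" for i
    by (rule cs_int[OF _ cKp]) (intro continuous_intros ppc gPd cont_of_diff, simp add: pp0)
  have E1: "(\<integral>v. partial_i i (partial_i i g) v * \<psi> v \<partial>lborel) = - (\<integral>v. partial_i i g v * partial_i i \<psi> v \<partial>lborel)" for i
    by (rule ibp[OF gdd pd gddc ppc cKp p0])
  have E2: "(\<integral>v. partial_i i (gP i) v * \<psi> v \<partial>lborel) = - (\<integral>v. gP i v * partial_i i \<psi> v \<partial>lborel)" for i
    by (rule ibp[OF gPd pd gPpc ppc cKp p0])
  have E3: "(\<integral>v. partial_i i M v * \<psi> v \<partial>lborel) = - (\<integral>v. M v * partial_i i \<psi> v \<partial>lborel)" for i
    by (rule ibp[OF M_diff pd dM_cont ppc cKp p0])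
  have E4: "(\<integral>v. partial_i i (partial_i i \<psi>) v * g v \<partial>lborel) = - (\<integral>v. partial_i i \<psi> v * partial_i i g v \<partial>lborel)" for i
    by (rule ibp[OF pdd gd pddc gpc cKg g0])
  define Wv where "Wv = (\<integral>w. M w *\<^sub>R grad \<psi> w \<partial>lborel)"
  have Wint: "integrable lborel (\<lambda>w. M w *\<^sub>R grad \<psi> w)"
    by (rule cs_int[OF continuous_on_scaleR[OF Mc gradc] cKp]) (simp add: grad0)
  have Wi: "Wv $ i = (\<integral>w. M w * partial_i i \<psi> w \<partial>lborel)" for i
  proof -
    have "Wv $ i = (\<integral>w. (M w *\<^sub>R grad \<psi> w) $ i \<partial>lborel)"
      unfolding Wv_def by (rule integral_bounded_linear[OF bounded_linear_vec_nth Wint, symmetric])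
    then show ?thesis by (simp add: grad_def)
  qed
  define W where "W = Wv /\<^sub>R c1 V \<sigma> \<Omega>"
  have PLin: "Lin V \<sigma> (\<lambda>v. \<rho> * M v) g v * \<psi> v = (\<Sum>i\<in>UNIV. \<sigma> * (partial_i i (partial_i i g) v * \<psi> v)
      + partial_i i (gP i) v * \<psi> v - c $ i / n * (partial_i i M v * \<psi> v))" for v
    unfolding Lin_eq sum_distrib_right by (intro sum.cong refl) (simp add: algebra_simps)
  have SL: "integrable lborel (\<lambda>v. \<sigma> * (partial_i i (partial_i i g) v * \<psi> v)
      + partial_i i (gP i) v * \<psi> v - c $ i / n * (partial_i i M v * \<psi> v))
    \<and> (\<integral>v. \<sigma> * (partial_i i (partial_i i g) v * \<psi> v)
      + partial_i i (gP i) v * \<psi> v - c $ i / n * (partial_i i M v * \<psi> v) \<partial>lborel)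
      = - \<sigma> * (\<integral>v. partial_i i g v * partial_i i \<psi> v \<partial>lborel) - (\<integral>v. gP i v * partial_i i \<psi> v \<partial>lborel)
        + c $ i / n * (\<integral>v. M v * partial_i i \<psi> v \<partial>lborel)" for i
    using I1[of i] I2[of i] I3[of i] E1[of i] E2[of i] E3[of i] by simp
  have LHSint: "integrable lborel (\<lambda>v. Lin V \<sigma> (\<lambda>v. \<rho> * M v) g v * \<psi> v)"
    unfolding PLin using SL by (intro Bochner_Integration.integrable_sum) auto
  have LHS: "(\<integral>v. Lin V \<sigma> (\<lambda>v. \<rho> * M v) g v * \<psi> v \<partial>lborel)
     = (\<Sum>i\<in>UNIV. - \<sigma> * (\<integral>v. partial_i i g v * partial_i i \<psi> v \<partial>lborel) - (\<integral>v. gP i v * partial_i i \<psi> v \<partial>lborel)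
        + c $ i / n * (\<integral>v. M v * partial_i i \<psi> v \<partial>lborel))"
    unfolding PLin using SL by (subst Bochner_Integration.integral_sum) auto
  have Dform: "\<sigma> * divg (\<lambda>w. M w *\<^sub>R grad \<psi> w) v / M v
      = (\<Sum>i\<in>UNIV. \<sigma> * partial_i i (partial_i i \<psi>) v - partial_i i (Phi V \<Omega>) v * partial_i i \<psi> v)" for v
  proof -
    have "divg (\<lambda>w. M w *\<^sub>R grad \<psi> w) v = (\<Sum>i\<in>UNIV. partial_i i M v * partial_i i \<psi> v + M v * partial_i i (partial_i i \<psi>) v)"
      unfolding divg_def by (intro sum.cong refl) (simp add: grad_def pd_mult[OF M_diff pdd])
    also have "\<dots> = M v / \<sigma> * (\<Sum>i\<in>UNIV. \<sigma> * partial_i i (partial_i i \<psi>) v - partial_i i (Phi V \<Omega>) v * partial_i i \<psi> v)"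
      unfolding sum_distrib_left using sigma_pos by (intro sum.cong refl) (simp add: dM field_simps)
    finally show ?thesis using sigma_pos M_pos[of v] by simp
  qed
  define T where "T v = g v * ((projP \<Omega> *v v) \<bullet> W)" for v
  have PR: "g v * (\<sigma> * divg (\<lambda>w. M w *\<^sub>R grad \<psi> w) v / M v + (projP \<Omega> *v v) \<bullet> W)
     = (\<Sum>i\<in>UNIV. \<sigma> * (partial_i i (partial_i i \<psi>) v * g v) - gP i v * partial_i i \<psi> v) + T v" for v
    unfolding Dform T_def gP_def by (simp add: algebra_simps sum_subtractf sum_distrib_left)
  have Tc: "continuous_on UNIV (\<lambda>v. projP \<Omega> *v v)"
    by (rule linear_continuous_on[OF matrix_vector_mul_bounded_linear])
  have Tint: "integrable lborel T"
    unfolding T_def by (rule cs_int[OF _ cKg]) (intro continuous_intros gc Tc, simp add: g0)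
  have Tval: "(\<integral>v. T v \<partial>lborel) = (\<Sum>i\<in>UNIV. c $ i * (\<integral>v. M v * partial_i i \<psi> v \<partial>lborel) / n)"
  proof -
    have "(\<integral>v. T v \<partial>lborel) = (\<integral>v. (g v *\<^sub>R v) \<bullet> (projP \<Omega> *v W) \<partial>lborel)"
      unfolding T_def by (rule Bochner_Integration.integral_cong) (simp_all add: projP_sym)
    also have "\<dots> = (\<integral>v. g v *\<^sub>R v \<partial>lborel) \<bullet> (projP \<Omega> *v W)"
      by (rule integral_inner_left) (use gint in auto)
    also have "\<dots> = c \<bullet> W" unfolding c_def by (simp add: projP_sym)
    also have "\<dots> = (\<Sum>i\<in>UNIV. c $ i * (\<integral>v. M v * partial_i i \<psi> v \<partial>lborel) / n)"
      unfolding inner_vec_def W_def c1n using Wi by (simp add: divide_inverse ac_simps)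
    finally show ?thesis .
  qed
  have SR: "integrable lborel (\<lambda>v. \<sigma> * (partial_i i (partial_i i \<psi>) v * g v) - gP i v * partial_i i \<psi> v)
    \<and> (\<integral>v. \<sigma> * (partial_i i (partial_i i \<psi>) v * g v) - gP i v * partial_i i \<psi> v \<partial>lborel)
      = - \<sigma> * (\<integral>v. partial_i i \<psi> v * partial_i i g v \<partial>lborel) - (\<integral>v. gP i v * partial_i i \<psi> v \<partial>lborel)" for i
    using I4[of i] I5[of i] E4[of i] by simp
  have RHSint: "integrable lborel (\<lambda>v. (\<Sum>i\<in>UNIV. \<sigma> * (partial_i i (partial_i i \<psi>) v * g v) - gP i v * partial_i i \<psi> v) + T v)"
    using SR Tint by (intro Bochner_Integration.integrable_add Bochner_Integration.integrable_sum) auto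
  have RHS: "(\<integral>v. (\<Sum>i\<in>UNIV. \<sigma> * (partial_i i (partial_i i \<psi>) v * g v) - gP i v * partial_i i \<psi> v) + T v \<partial>lborel)
     = (\<Sum>i\<in>UNIV. - \<sigma> * (\<integral>v. partial_i i \<psi> v * partial_i i g v \<partial>lborel) - (\<integral>v. gP i v * partial_i i \<psi> v \<partial>lborel))
       + (\<Sum>i\<in>UNIV. c $ i * (\<integral>v. M v * partial_i i \<psi> v \<partial>lborel) / n)"
  proof -
    have "(\<integral>v. (\<Sum>i\<in>UNIV. \<sigma> * (partial_i i (partial_i i \<psi>) v * g v) - gP i v * partial_i i \<psi> v) + T v \<partial>lborel)
      = (\<integral>v. (\<Sum>i\<in>UNIV. \<sigma> * (partial_i i (partial_i i \<psi>) v * g v) - gP i v * partial_i i \<psi> v) \<partial>lborel) + (\<integral>v. T v \<partial>lborel)"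
      using SR Tint by (intro Bochner_Integration.integral_add Bochner_Integration.integrable_sum) auto
    also have "(\<integral>v. (\<Sum>i\<in>UNIV. \<sigma> * (partial_i i (partial_i i \<psi>) v * g v) - gP i v * partial_i i \<psi> v) \<partial>lborel)
      = (\<Sum>i\<in>UNIV. - \<sigma> * (\<integral>v. partial_i i \<psi> v * partial_i i g v \<partial>lborel) - (\<integral>v. gP i v * partial_i i \<psi> v \<partial>lborel))"
      using SR by (subst Bochner_Integration.integral_sum) auto
    finally show ?thesis unfolding Tval .
  qed
  have comm: "(\<integral>v. partial_i i \<psi> v * partial_i i g v \<partial>lborel) = (\<integral>v. partial_i i g v * partial_i i \<psi> v \<partial>lborel)" for i
    by (simp add: mult.commute)
  have RHS_eq: "(\<lambda>v. g v * (\<sigma> * divg (\<lambda>w. M w *\<^sub>R grad \<psi> w) v / M v + (projP \<Omega> *v v) \<bullet> W))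
     = (\<lambda>v. (\<Sum>i\<in>UNIV. \<sigma> * (partial_i i (partial_i i \<psi>) v * g v) - gP i v * partial_i i \<psi> v) + T v)"
    using PR by auto
  show ?thesis
    unfolding Wv_def[symmetric] W_def[symmetric] RHS_eq
  proof (intro conjI LHSint RHSint)
    show "(\<integral>v. Lin V \<sigma> (\<lambda>v. \<rho> * M v) g v * \<psi> v \<partial>lborel)
      = (\<integral>v. (\<Sum>i\<in>UNIV. \<sigma> * (partial_i i (partial_i i \<psi>) v * g v) - gP i v * partial_i i \<psi> v) + T v \<partial>lborel)"
      unfolding LHS RHS comm by (simp add: sum.distrib[symmetric] algebra_simps)
  qed
qed

end

theorem proposition3:
  fixes V :: "real \<Rightarrow> real" and \<sigma> \<rho> :: real and \<Omega> :: "real^'n::finite"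
    and f :: "real^'n \<Rightarrow> real"
  assumes dim: "CARD('n) \<ge> 2"
    and sigma_pos: "\<sigma> > 0"
    and Z_fin: "\<forall>\<Omega>'::real^'n. norm \<Omega>' = 1 \<longrightarrow>
                  integrable lborel (\<lambda>v. exp (- Phi V \<Omega>' v / \<sigma>))"
    and second_moment: "\<forall>\<Omega>'::real^'n. norm \<Omega>' = 1 \<longrightarrow>
                  integrable lborel (\<lambda>v. (norm v)\<^sup>2 * Mx V \<sigma> \<Omega>' v)"
    and V_reg: "C2 (\<lambda>v::real^'n. V (norm v))"
    and rho_pos: "\<rho> > 0"
    and Omega_unit: "norm \<Omega> = 1"
    and f_def: "f = (\<lambda>v. \<rho> * Mx V \<sigma> \<Omega> v)"
    and Omega_f: "Omega_of f = \<Omega>"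
  shows
    "(\<forall>g. C2 g \<and> integrable lborel (\<lambda>v. g v *\<^sub>R v) \<longrightarrow>
        (\<forall>v. ((\<lambda>s. Qop V \<sigma> (\<lambda>w. f w + s * g w) v) has_real_derivative
              divg (\<lambda>w. \<sigma> *\<^sub>R grad g w + g w *\<^sub>R grad (Phi V \<Omega>) w
                   - (f w / (\<integral>u. (u \<bullet> \<Omega>) * f u \<partial>lborel))
                       *\<^sub>R (projP \<Omega> *v (\<integral>u. g u *\<^sub>R u \<partial>lborel))) v) (at 0))
        \<and> (\<forall>v. Lin V \<sigma> f g v = Lin V \<sigma> (Mx V \<sigma> \<Omega>) g v))
     \<and> (\<forall>g \<psi>. C2 g \<and> compact_supp g \<and> C2 \<psi> \<and> compact_supp \<psi> \<longrightarrow>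
          integrable lborel (\<lambda>v. Lin V \<sigma> f g v * \<psi> v)
        \<and> integrable lborel (\<lambda>v. g v *
             (\<sigma> * divg (\<lambda>w. Mx V \<sigma> \<Omega> w *\<^sub>R grad \<psi> w) v / Mx V \<sigma> \<Omega> v
              + (projP \<Omega> *v v) \<bullet> ((\<integral>w. Mx V \<sigma> \<Omega> w *\<^sub>R grad \<psi> w \<partial>lborel) /\<^sub>R c1 V \<sigma> \<Omega>)))
        \<and> (\<integral>v. Lin V \<sigma> f g v * \<psi> v \<partial>lborel)
          = (\<integral>v. g v *
             (\<sigma> * divg (\<lambda>w. Mx V \<sigma> \<Omega> w *\<^sub>R grad \<psi> w) v / Mx V \<sigma> \<Omega> v
              + (projP \<Omega> *v v) \<bullet> ((\<integral>w. Mx V \<sigma> \<Omega> w *\<^sub>R grad \<psi> w \<partial>lborel) /\<^sub>R c1 V \<sigma> \<Omega>))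
             \<partial>lborel))
     \<and> (\<forall>i v. Lin V \<sigma> f (\<lambda>w. f w * (w - \<Omega>) $ i) v
          = \<sigma> * partial_i i f v
            - divg (\<lambda>w. (f w / c1 V \<sigma> \<Omega>) *\<^sub>R (pressure V \<sigma> \<Omega> $ i)) v)"
proof -
  have Om: "Omega_of (\<lambda>v. \<rho> * Mx V \<sigma> \<Omega> v) = \<Omega>" using Omega_f f_def by simp
  have Zne: "Zc V \<sigma> \<Omega> \<noteq> 0"
  proof
    assume Z0: "Zc V \<sigma> \<Omega> = 0"
    then have "(\<lambda>v. \<rho> * Mx V \<sigma> \<Omega> v) = (\<lambda>v. 0)" by (simp add: Mx_def)
    then have "Omega_of (\<lambda>v. \<rho> * Mx V \<sigma> \<Omega> v) = 0" by (simp add: Omega_of_def)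
    with Om Omega_unit show False by simp
  qed
  interpret S: setting V \<sigma> \<Omega>
    by unfold_locales (use sigma_pos V_reg Omega_unit Z_fin second_moment Zne in auto)
  have OmM: "Omega_of (\<lambda>v. 1 * Mx V \<sigma> \<Omega> v) = \<Omega>" using S.Omega_facts(4)[OF rho_pos Om] by simp
  have P1: "\<forall>g. C2 g \<and> integrable lborel (\<lambda>v. g v *\<^sub>R v) \<longrightarrow>
        (\<forall>v. ((\<lambda>s. Qop V \<sigma> (\<lambda>w. f w + s * g w) v) has_real_derivative
              divg (\<lambda>w. \<sigma> *\<^sub>R grad g w + g w *\<^sub>R grad (Phi V \<Omega>) w
                   - (f w / (\<integral>u. (u \<bullet> \<Omega>) * f u \<partial>lborel))
                       *\<^sub>R (projP \<Omega> *v (\<integral>u. g u *\<^sub>R u \<partial>lborel))) v) (at 0))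
        \<and> (\<forall>v. Lin V \<sigma> f g v = Lin V \<sigma> (Mx V \<sigma> \<Omega>) g v)"
  proof (intro allI impI conjI)
    fix g :: "real^'n \<Rightarrow> real" and v
    assume a: "C2 g \<and> integrable lborel (\<lambda>v. g v *\<^sub>R v)"
    note gd = C2_parts(1)[OF conjunct1[OF a]] and gdd = C2_parts(2)[OF conjunct1[OF a]]
    note gint = conjunct2[OF a]
    have D1: "((\<lambda>s. Qop V \<sigma> (\<lambda>w. f w + s * g w) v) has_real_derivative
              divg (\<lambda>w. \<sigma> *\<^sub>R grad g w + g w *\<^sub>R grad (Phi V \<Omega>) w
                   - (f w / (\<integral>u. (u \<bullet> \<Omega>) * f u \<partial>lborel))
                       *\<^sub>R (projP \<Omega> *v (\<integral>u. g u *\<^sub>R u \<partial>lborel))) v) (at 0)" for v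
      unfolding f_def by (rule S.part1[OF rho_pos Om gd gdd gint])
    then show "((\<lambda>s. Qop V \<sigma> (\<lambda>w. f w + s * g w) v) has_real_derivative
              divg (\<lambda>w. \<sigma> *\<^sub>R grad g w + g w *\<^sub>R grad (Phi V \<Omega>) w
                   - (f w / (\<integral>u. (u \<bullet> \<Omega>) * f u \<partial>lborel))
                       *\<^sub>R (projP \<Omega> *v (\<integral>u. g u *\<^sub>R u \<partial>lborel))) v) (at 0)" .
    have D2: "((\<lambda>s. Qop V \<sigma> (\<lambda>w. Mx V \<sigma> \<Omega> w + s * g w) v) has_real_derivative
              divg (\<lambda>w. \<sigma> *\<^sub>R grad g w + g w *\<^sub>R grad (Phi V \<Omega>) w
                   - (Mx V \<sigma> \<Omega> w / (\<integral>u. (u \<bullet> \<Omega>) * Mx V \<sigma> \<Omega> u \<partial>lborel))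
                       *\<^sub>R (projP \<Omega> *v (\<integral>u. g u *\<^sub>R u \<partial>lborel))) v) (at 0)"
      using S.part1[OF zero_less_one OmM gd gdd gint, of v] by simp
    have KK: "(\<integral>u. (u \<bullet> \<Omega>) * (\<rho> * Mx V \<sigma> \<Omega> u) \<partial>lborel) = \<rho> * (\<integral>u. (u \<bullet> \<Omega>) * Mx V \<sigma> \<Omega> u \<partial>lborel)"
    proof -
      have "(\<integral>u. (u \<bullet> \<Omega>) * (\<rho> * Mx V \<sigma> \<Omega> u) \<partial>lborel) = (\<integral>u. \<rho> * ((u \<bullet> \<Omega>) * Mx V \<sigma> \<Omega> u) \<partial>lborel)"
        by (rule Bochner_Integration.integral_cong) auto
      then show ?thesis by simp
    qed
    have eqf: "(\<lambda>w. \<sigma> *\<^sub>R grad g w + g w *\<^sub>R grad (Phi V \<Omega>) w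
                   - (f w / (\<integral>u. (u \<bullet> \<Omega>) * f u \<partial>lborel))
                       *\<^sub>R (projP \<Omega> *v (\<integral>u. g u *\<^sub>R u \<partial>lborel)))
        = (\<lambda>w. \<sigma> *\<^sub>R grad g w + g w *\<^sub>R grad (Phi V \<Omega>) w
                   - (Mx V \<sigma> \<Omega> w / (\<integral>u. (u \<bullet> \<Omega>) * Mx V \<sigma> \<Omega> u \<partial>lborel))
                       *\<^sub>R (projP \<Omega> *v (\<integral>u. g u *\<^sub>R u \<partial>lborel)))"
      unfolding f_def KK using rho_pos by auto
    show "Lin V \<sigma> f g v = Lin V \<sigma> (Mx V \<sigma> \<Omega>) g v"
      unfolding Lin_def using DERIV_imp_deriv[OF D1[of v]] DERIV_imp_deriv[OF D2] eqf by simp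
  qed
  have P2: "\<forall>g \<psi>. C2 g \<and> compact_supp g \<and> C2 \<psi> \<and> compact_supp \<psi> \<longrightarrow>
          integrable lborel (\<lambda>v. Lin V \<sigma> f g v * \<psi> v)
        \<and> integrable lborel (\<lambda>v. g v *
             (\<sigma> * divg (\<lambda>w. Mx V \<sigma> \<Omega> w *\<^sub>R grad \<psi> w) v / Mx V \<sigma> \<Omega> v
              + (projP \<Omega> *v v) \<bullet> ((\<integral>w. Mx V \<sigma> \<Omega> w *\<^sub>R grad \<psi> w \<partial>lborel) /\<^sub>R c1 V \<sigma> \<Omega>)))
        \<and> (\<integral>v. Lin V \<sigma> f g v * \<psi> v \<partial>lborel)
          = (\<integral>v. g v *
             (\<sigma> * divg (\<lambda>w. Mx V \<sigma> \<Omega> w *\<^sub>R grad \<psi> w) v / Mx V \<sigma> \<Omega> v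
              + (projP \<Omega> *v v) \<bullet> ((\<integral>w. Mx V \<sigma> \<Omega> w *\<^sub>R grad \<psi> w \<partial>lborel) /\<^sub>R c1 V \<sigma> \<Omega>))
             \<partial>lborel)"
    unfolding f_def using S.part2[OF rho_pos Om] by blast
  have P3: "\<forall>i v. Lin V \<sigma> f (\<lambda>w. f w * (w - \<Omega>) $ i) v
          = \<sigma> * partial_i i f v
            - divg (\<lambda>w. (f w / c1 V \<sigma> \<Omega>) *\<^sub>R (pressure V \<sigma> \<Omega> $ i)) v"
    unfolding f_def using S.part3[OF rho_pos Om] by blast
  show ?thesis using P1 P2 P3 by blast
qed

end
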